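(* Assume the standing setup below and additionally $n\ge 2s-2r+1$. Then for every integer $i$ with $0\le i\le s-2r+1$, \[ \binom{n-1}{i}+\binom{n-1}{i+1}+\cdots+\binom{n-1}{i+2r-1}+\dim\left(\frac{\langle L_H: H\in \bigcup_{j=i}^{s}\mathbb{P}_j(X)\rangle}{\langle L_H: H\in \bigcup_{j=i}^{i+2r-1}\mathbb{P}_j(X)\rangle}\right) \le \binom{n-1}{s-2r+1}+\binom{n-1}{s-2r+2}+\cdots+\binom{n-1}{s}, \] where $\langle S\rangle$ is the $\mathbb{F}_p$-span of $S$ and the fraction denotes the quotient vector space.
   Context: Standing setup: $p$ is a prime; $K=\{k_1,\ldots,k_r\}$ and $L=\{l_1,\ldots,l_s\}$ are disjoint subsets of $\{0,1,\ldots,p-1\}$; $\mathcal{A}=\{A_1,\ldots,A_m\}$ is a family of distinct subsets of $[n]$ with $|A_i|\pmod p\in K$ for all $i$ and $|A_i\cap A_j|\pmod p\in L$ for all $i\ne j$. Let $X=[n-1]$. Associate a variable $x_i$ to each $A_i$, and for each $I\subseteq X$ define the linear form over $\mathbb{F}_p$: $L_I=\sum_{i:\ I\subseteq A_i} x_i$. For $j\ge0$, $\mathbb{P}_j(X)$ is the set of $j$-element subsets of $X$. *)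

theory Defs
  imports Main "HOL-Library.Function_Algebras" "Berlekamp_Zassenhaus.Finite_Field"
begin

text \<open>Vectors of F_p^m are represented as functions nat => 'p mod_ring
  (coordinates 0..<m are the relevant ones); scalar multiplication is pointwise.\<close>

definition fscale :: "'a::field \<Rightarrow> (nat \<Rightarrow> 'a) \<Rightarrow> (nat \<Rightarrow> 'a)" where
  "fscale c v = (\<lambda>k. c * v k)"

text \<open>The linear form L_I = sum of x_k over k < m with I subset of A k, as its coefficient vector.\<close>
definition LForm :: "(nat \<Rightarrow> nat set) \<Rightarrow> nat \<Rightarrow> nat set \<Rightarrow> (nat \<Rightarrow> 'a::field)" where
  "LForm A m I = (\<lambda>k. if k < m \<and> I \<subseteq> A k then 1 else 0)"

definition spandim :: "(nat \<Rightarrow> 'a::field) set \<Rightarrow> nat" where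
  "spandim S = vector_space.dim fscale (module.span fscale S)"

end

theory Submission
  imports Defs
begin

interpretation fv: vector_space "fscale :: 'a::field \<Rightarrow> (nat \<Rightarrow> 'a) \<Rightarrow> _"
  by unfold_locales (auto simp: fscale_def fun_eq_iff algebra_simps)

lemma sum_apply_fun: "(sum f A) k = (\<Sum>x\<in>A. f x k)"
  by (induction A rule: infinite_finite_induct) (auto simp: func_plus func_zero)

lemma alt_sum_Pow:
  assumes "finite T"
  shows "(\<Sum>E\<in>Pow T. (-1::'a::ring_1) ^ card E) = (if T = {} then 1 else 0)"
  using assms
proof (induction T rule: finite_induct)
  case empty
  then show ?case by simp
next
  case (insert x F)
  have inj: "inj_on (insert x) (Pow F)" using insert(2) by (auto simp: inj_on_def)
  have dis: "Pow F \<inter> insert x ` Pow F = {}" using insert(2) by auto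
  have "(\<Sum>E\<in>Pow (insert x F). (-1::'a) ^ card E)
     = (\<Sum>E\<in>Pow F. (-1::'a) ^ card E) + (\<Sum>E\<in>insert x ` Pow F. (-1::'a) ^ card E)"
    unfolding Pow_insert using insert(1) dis by (intro sum.union_disjoint) auto
  also have "(\<Sum>E\<in>insert x ` Pow F. (-1::'a) ^ card E) = (\<Sum>E\<in>Pow F. (-1::'a) ^ card (insert x E))"
    using inj by (simp add: sum.reindex)
  also have "\<dots> = (\<Sum>E\<in>Pow F. - ((-1::'a) ^ card E))"
  proof (rule sum.cong[OF refl])
    fix E assume "E \<in> Pow F"
    then have "finite E" "x \<notin> E" using insert(1,2) by (auto intro: finite_subset)
    then have "card (insert x E) = Suc (card E)" by simp
    then show "(-1::'a) ^ card (insert x E) = - ((-1::'a) ^ card E)" by simp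
  qed
  finally show ?case by (simp add: sum_negf)
qed

lemma card_supsets:
  assumes "finite H" "G \<subseteq> H" "card G \<le> k"
  shows "card {G'. G \<subseteq> G' \<and> G' \<subseteq> H \<and> card G' = k} = (card H - card G) choose (k - card G)"
proof -
  have fG: "finite G" using assms finite_subset by blast
  have eq: "{G'. G \<subseteq> G' \<and> G' \<subseteq> H \<and> card G' = k} = (\<lambda>E. G \<union> E) ` {E. E \<subseteq> H - G \<and> card E = k - card G}"
  proof (intro equalityI subsetI)
    fix G' assume "G' \<in> {G'. G \<subseteq> G' \<and> G' \<subseteq> H \<and> card G' = k}"
    then have h: "G \<subseteq> G'" "G' \<subseteq> H" "card G' = k" by auto
    have "finite G'" using h assms finite_subset by blast
    then have "card (G' - G) = k - card G" using h by (simp add: card_Diff_subset fG)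
    moreover have "G' = G \<union> (G' - G)" using h by auto
    ultimately show "G' \<in> (\<lambda>E. G \<union> E) ` {E. E \<subseteq> H - G \<and> card E = k - card G}"
      using h by (intro image_eqI[where x="G' - G"]) auto
  next
    fix G' assume "G' \<in> (\<lambda>E. G \<union> E) ` {E. E \<subseteq> H - G \<and> card E = k - card G}"
    then obtain E where E: "E \<subseteq> H - G" "card E = k - card G" "G' = G \<union> E" by auto
    have "finite E" using E assms finite_subset by (metis finite_Diff)
    then have "card G' = card G + card E" using E fG by (simp add: card_Un_disjoint Int_commute) (metis Diff_disjoint Int_commute card_Un_disjoint disjoint_iff_not_equal subset_iff)
    then show "G' \<in> {G'. G \<subseteq> G' \<and> G' \<subseteq> H \<and> card G' = k}" using E assms by auto
  qed
  have inj: "inj_on (\<lambda>E. G \<union> E) {E. E \<subseteq> H - G \<and> card E = k - card G}"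
    by (auto simp: inj_on_def)
  show ?thesis unfolding eq card_image[OF inj]
    using assms by (simp add: n_subsets card_Diff_subset fG)
qed

lemma sq_case:
  fixes \<Phi> :: "nat set \<Rightarrow> nat \<Rightarrow> 'a::field"
  assumes fS: "finite S" and ab: "a \<le> b" and abS: "a + b = card S"
    and chr: "\<And>x y. y \<le> x \<Longrightarrow> x \<le> b \<Longrightarrow> of_nat (x choose y) \<noteq> (0::'a)"
    and rel: "\<And>G. G \<subseteq> S \<Longrightarrow> card G = a \<Longrightarrow> (\<Sum>H\<in>{H. G \<subseteq> H \<and> H \<subseteq> S \<and> card H = b}. \<Phi> H) \<in> fv.span B"
    and H0: "H0 \<subseteq> S" "card H0 = b"
  shows "\<Phi> H0 \<in> fv.span B"
proof -
  have relg: "(\<Sum>H\<in>{H. G \<subseteq> H \<and> H \<subseteq> S \<and> card H = b}. \<Phi> H) \<in> fv.span B"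
    if G: "G \<subseteq> S" "card G \<le> a" for G
  proof -
    let ?A = "{G'. G \<subseteq> G' \<and> G' \<subseteq> S \<and> card G' = a}"
    let ?B = "{H. G \<subseteq> H \<and> H \<subseteq> S \<and> card H = b}"
    define c where "c = (of_nat ((b - card G) choose (a - card G)) :: 'a)"
    have c0: "c \<noteq> 0" unfolding c_def using chr ab G by auto
    have fA: "finite ?A" by (rule finite_subset[of _ "Pow S"]) (use fS in auto)
    have fB: "finite ?B" by (rule finite_subset[of _ "Pow S"]) (use fS in auto)
    have "(\<Sum>G'\<in>?A. \<Sum>H\<in>{H. G' \<subseteq> H \<and> H \<subseteq> S \<and> card H = b}. \<Phi> H) \<in> fv.span B"
      by (intro fv.span_sum rel) auto
    moreover have "(\<Sum>G'\<in>?A. \<Sum>H\<in>{H. G' \<subseteq> H \<and> H \<subseteq> S \<and> card H = b}. \<Phi> H) = fscale c (\<Sum>H\<in>?B. \<Phi> H)"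
    proof (rule ext)
      fix k
      have "(\<Sum>G'\<in>?A. \<Sum>H\<in>{H. G' \<subseteq> H \<and> H \<subseteq> S \<and> card H = b}. \<Phi> H) k
          = (\<Sum>G'\<in>?A. \<Sum>H\<in>{H. H \<in> ?B \<and> G' \<subseteq> H}. \<Phi> H k)"
        unfolding sum_apply_fun by (intro sum.cong refl) auto
      also have "\<dots> = (\<Sum>H\<in>?B. \<Sum>G'\<in>{G'. G' \<in> ?A \<and> G' \<subseteq> H}. \<Phi> H k)"
        by (rule sum.swap_restrict[OF fA fB])
      also have "\<dots> = (\<Sum>H\<in>?B. c * \<Phi> H k)"
      proof (intro sum.cong refl)
        fix H assume H: "H \<in> ?B"
        have fH: "finite H" using H fS finite_subset by blast
        have "{G'. G' \<in> ?A \<and> G' \<subseteq> H} = {G'. G \<subseteq> G' \<and> G' \<subseteq> H \<and> card G' = a}"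
          using H by auto
        then have "card {G'. G' \<in> ?A \<and> G' \<subseteq> H} = (b - card G) choose (a - card G)"
          using card_supsets[OF fH, of G a] H G by auto
        then show "(\<Sum>G'\<in>{G'. G' \<in> ?A \<and> G' \<subseteq> H}. \<Phi> H k) = c * \<Phi> H k"
          by (simp add: c_def)
      qed
      finally show "(\<Sum>G'\<in>?A. \<Sum>H\<in>{H. G' \<subseteq> H \<and> H \<subseteq> S \<and> card H = b}. \<Phi> H) k
          = fscale c (\<Sum>H\<in>?B. \<Phi> H) k"
        by (simp add: fscale_def sum_apply_fun sum_distrib_left)
    qed
    ultimately have "fscale c (\<Sum>H\<in>?B. \<Phi> H) \<in> fv.span B" by simp
    then have "fscale (inverse c) (fscale c (\<Sum>H\<in>?B. \<Phi> H)) \<in> fv.span B" by (rule fv.span_scale)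
    then show ?thesis using c0 by (simp add: fv.scale_scale)
  qed
  define D where "D = S - H0"
  have fD: "finite D" "D \<subseteq> S" using fS by (auto simp: D_def)
  have cD: "card D = a" unfolding D_def using H0 abS fS
    by (simp add: card_Diff_subset finite_subset)
  let ?B = "{H. H \<subseteq> S \<and> card H = b}"
  have fB: "finite ?B" by (rule finite_subset[of _ "Pow S"]) (use fS in auto)
  have "(\<Sum>E\<in>Pow D. fscale ((-1)^card E) (\<Sum>H\<in>{H. E \<subseteq> H \<and> H \<subseteq> S \<and> card H = b}. \<Phi> H)) \<in> fv.span B"
    using fD cD by (intro fv.span_sum fv.span_scale relg) (auto simp: card_mono)
  moreover have "(\<Sum>E\<in>Pow D. fscale ((-1)^card E) (\<Sum>H\<in>{H. E \<subseteq> H \<and> H \<subseteq> S \<and> card H = b}. \<Phi> H)) = \<Phi> H0"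
  proof (rule ext)
    fix k
    have "(\<Sum>E\<in>Pow D. fscale ((-1)^card E) (\<Sum>H\<in>{H. E \<subseteq> H \<and> H \<subseteq> S \<and> card H = b}. \<Phi> H)) k
        = (\<Sum>E\<in>Pow D. \<Sum>H\<in>{H. H \<in> ?B \<and> E \<subseteq> H}. (-1)^card E * \<Phi> H k)"
      unfolding sum_apply_fun fscale_def sum_distrib_left by (intro sum.cong refl) auto
    also have "\<dots> = (\<Sum>H\<in>?B. \<Sum>E\<in>{E. E \<in> Pow D \<and> E \<subseteq> H}. (-1)^card E * \<Phi> H k)"
      by (rule sum.swap_restrict) (use fD fB in auto)
    also have "\<dots> = (\<Sum>H\<in>?B. if H = H0 then \<Phi> H k else 0)"
    proof (intro sum.cong refl)
      fix H assume H: "H \<in> ?B"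
      have "{E. E \<in> Pow D \<and> E \<subseteq> H} = Pow (D \<inter> H)" by auto
      then have "(\<Sum>E\<in>{E. E \<in> Pow D \<and> E \<subseteq> H}. (-1)^card E * \<Phi> H k)
          = (\<Sum>E\<in>Pow (D \<inter> H). (-1)^card E) * \<Phi> H k"
        by (simp add: sum_distrib_right)
      also have "\<dots> = (if D \<inter> H = {} then 1 else 0) * \<Phi> H k"
        using alt_sum_Pow[of "D \<inter> H", where 'a='a] fD by simp
      also have "(D \<inter> H = {}) = (H = H0)"
      proof
        assume "D \<inter> H = {}"
        then have "H \<subseteq> H0" using H by (auto simp: D_def)
        then show "H = H0" using H H0 fS by (metis (mono_tags, lifting) card_subset_eq finite_subset mem_Collect_eq)
      qed (auto simp: D_def)
      finally show "(\<Sum>E\<in>{E. E \<in> Pow D \<and> E \<subseteq> H}. (-1)^card E * \<Phi> H k) = (if H = H0 then \<Phi> H k else 0)"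
        by simp
    qed
    also have "\<dots> = \<Phi> H0 k" using fB H0 by (simp add: sum.delta)
    finally show "(\<Sum>E\<in>Pow D. fscale ((-1)^card E) (\<Sum>H\<in>{H. E \<subseteq> H \<and> H \<subseteq> S \<and> card H = b}. \<Phi> H)) k = \<Phi> H0 k" .
  qed
  ultimately show ?thesis by simp
qed


lemma incl_span:
  fixes \<Phi> :: "nat set \<Rightarrow> nat \<Rightarrow> 'a::field"
  assumes "finite S"
  shows "a \<le> b \<Longrightarrow> a + b \<le> card S \<Longrightarrow> (\<And>x y. y \<le> x \<Longrightarrow> x \<le> b \<Longrightarrow> of_nat (x choose y) \<noteq> (0::'a)) \<Longrightarrow>
     (\<And>G. G \<subseteq> S \<Longrightarrow> card G = a \<Longrightarrow> (\<Sum>H\<in>{H. G \<subseteq> H \<and> H \<subseteq> S \<and> card H = b}. \<Phi> H) \<in> fv.span B) \<Longrightarrow>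
     \<exists>F. F \<subseteq> {H. H \<subseteq> S \<and> card H = b} \<and> card F + (card S choose a) \<le> card S choose b \<and>
        (\<forall>H. H \<subseteq> S \<longrightarrow> card H = b \<longrightarrow> \<Phi> H \<in> fv.span (B \<union> \<Phi> ` F))"
  using assms
proof (induction S arbitrary: a b \<Phi> B rule: finite_induct)
  case empty
  then have "a = 0" "b = 0" by auto
  moreover have "{H::nat set. H = {} \<and> card H = 0} = {{}}" by auto
  ultimately show ?case using empty.prems(4)[of "{}"] by (intro exI[of _ "{}"]) auto
next
  case (insert x S0)
  let ?S = "insert x S0"
  have cS: "card ?S = Suc (card S0)" using insert(1,2) by simp
  show ?case
  proof (cases "a + b = card ?S")
    case True
    have "card ?S choose a = card ?S choose b" using True
      proof -
      have e: "card ?S - a = b" using True by simp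
      have "a \<le> card ?S" using True by simp
      then show ?thesis using binomial_symmetric[of a "card ?S"] e by simp
    qed
    moreover have "\<forall>H. H \<subseteq> ?S \<longrightarrow> card H = b \<longrightarrow> \<Phi> H \<in> fv.span (B \<union> \<Phi> ` {})"
      using sq_case[of ?S a b \<Phi> B] insert.prems True insert(1) by auto
    ultimately show ?thesis by (intro exI[of _ "{}"]) auto
  next
    case False
    then have abS0: "a + b \<le> card S0" using insert.prems(2) cS by simp
    show ?thesis
    proof (cases "a = 0")
      case True
      let ?Bs = "{H. H \<subseteq> ?S \<and> card H = b}"
      have fBs: "finite ?Bs" by (rule finite_subset[of _ "Pow ?S"]) (use insert(1) in auto)
      have cBs: "card ?Bs = card ?S choose b" using n_subsets[of ?S b] insert(1) by simp
      obtain H0 where H0: "H0 \<subseteq> ?S" "card H0 = b"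
      proof -
        have "b \<le> card ?S" using abS0 cS by simp
        then show ?thesis using obtain_subset_with_card_n[of b ?S] that by blast
      qed
      let ?F = "?Bs - {H0}"
      have rel0: "(\<Sum>H\<in>?Bs. \<Phi> H) \<in> fv.span B" using insert.prems(4)[of "{}"] True by simp
      have "\<Phi> H \<in> fv.span (B \<union> \<Phi> ` ?F)" if H: "H \<subseteq> ?S" "card H = b" for H
      proof (cases "H = H0")
        case True
        have "(\<Sum>H\<in>?Bs. \<Phi> H) = \<Phi> H0 + (\<Sum>H\<in>?F. \<Phi> H)"
          using H0 fBs by (simp add: sum.remove)
        then have "\<Phi> H0 = (\<Sum>H\<in>?Bs. \<Phi> H) - (\<Sum>H\<in>?F. \<Phi> H)" by (simp add: algebra_simps)
        moreover have "(\<Sum>H\<in>?Bs. \<Phi> H) \<in> fv.span (B \<union> \<Phi> ` ?F)"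
          using rel0 fv.span_mono[of B "B \<union> \<Phi> ` ?F"] by auto
        moreover have "(\<Sum>H\<in>?F. \<Phi> H) \<in> fv.span (B \<union> \<Phi> ` ?F)"
          by (intro fv.span_sum fv.span_base) auto
        ultimately show ?thesis using True by (simp add: fv.span_diff)
      next
        case False
        then show ?thesis using H by (intro fv.span_base) auto
      qed
      moreover have "card ?F + (card ?S choose a) \<le> card ?S choose b"
      proof -
        have "H0 \<in> ?Bs" using H0 by simp
        then have "card ?Bs \<ge> 1" using fBs card_gt_0_iff[of ?Bs] by auto
        moreover have "card ?F = card ?Bs - 1" using \<open>H0 \<in> ?Bs\<close> fBs by (simp add: card_Diff_singleton)
        ultimately show ?thesis using True cBs by simp
      qed
      ultimately show ?thesis by (intro exI[of _ ?F]) auto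
    next
      case False
      then obtain a' where a': "a = Suc a'" by (cases a) auto
      obtain b' where b': "b = Suc b'" using insert.prems(1) a' by (cases b) auto
      have xS0: "x \<notin> S0" by (rule insert(2))
      have finS0: "finite S0" by (rule insert(1))
      define \<Phi>1 where "\<Phi>1 = (\<lambda>H'. \<Phi> (insert x H'))"
      have img: "{H. insert x G' \<subseteq> H \<and> H \<subseteq> ?S \<and> card H = b} = insert x ` {H'. G' \<subseteq> H' \<and> H' \<subseteq> S0 \<and> card H' = b'}"
        if "G' \<subseteq> S0" for G'
      proof (intro equalityI subsetI)
        fix H assume "H \<in> {H. insert x G' \<subseteq> H \<and> H \<subseteq> ?S \<and> card H = b}"
        then have H: "insert x G' \<subseteq> H" "H \<subseteq> ?S" "card H = b" by auto
        have fH: "finite H" using H finS0 by (meson finite_insert finite_subset)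
        have "card (H - {x}) = b'" using H fH b' by simp
        moreover have "H = insert x (H - {x})" using H by auto
        ultimately show "H \<in> insert x ` {H'. G' \<subseteq> H' \<and> H' \<subseteq> S0 \<and> card H' = b'}"
          using H xS0 that by (intro image_eqI[where x="H - {x}"]) auto
      next
        fix H assume "H \<in> insert x ` {H'. G' \<subseteq> H' \<and> H' \<subseteq> S0 \<and> card H' = b'}"
        then obtain H' where H': "G' \<subseteq> H'" "H' \<subseteq> S0" "card H' = b'" "H = insert x H'" by auto
        have "finite H'" using H' finS0 finite_subset by blast
        moreover have "x \<notin> H'" using H' xS0 by auto
        ultimately have "card H = b" using H' b' by simp
        then show "H \<in> {H. insert x G' \<subseteq> H \<and> H \<subseteq> ?S \<and> card H = b}" using H' by auto
      qed
      have injx: "inj_on (insert x) {H'. G' \<subseteq> H' \<and> H' \<subseteq> S0 \<and> card H' = b'}" for G'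
      proof (rule inj_onI)
        fix A1 A2 assume "A1 \<in> {H'. G' \<subseteq> H' \<and> H' \<subseteq> S0 \<and> card H' = b'}" "A2 \<in> {H'. G' \<subseteq> H' \<and> H' \<subseteq> S0 \<and> card H' = b'}"
          "insert x A1 = insert x A2"
        then have "x \<notin> A1" "x \<notin> A2" "insert x A1 = insert x A2" using xS0 by auto
        then show "A1 = A2" by (metis Diff_insert_absorb)
      qed
      have IH1: "\<exists>F. F \<subseteq> {H. H \<subseteq> S0 \<and> card H = b'} \<and> card F + (card S0 choose a') \<le> card S0 choose b' \<and>
        (\<forall>H. H \<subseteq> S0 \<longrightarrow> card H = b' \<longrightarrow> \<Phi>1 H \<in> fv.span (B \<union> \<Phi>1 ` F))"
      proof (rule insert.IH)
        show "a' \<le> b'" using insert.prems(1) a' b' by simp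
        show "a' + b' \<le> card S0" using abS0 a' b' by simp
        show "of_nat (x choose y) \<noteq> (0::'a)" if "y \<le> x" "x \<le> b'" for x y
          using insert.prems(3) that b' by simp
        fix G' assume G': "G' \<subseteq> S0" "card G' = a'"
        have "(\<Sum>H\<in>{H'. G' \<subseteq> H' \<and> H' \<subseteq> S0 \<and> card H' = b'}. \<Phi>1 H)
            = (\<Sum>H\<in>{H. insert x G' \<subseteq> H \<and> H \<subseteq> ?S \<and> card H = b}. \<Phi> H)"
          unfolding img[OF G'(1)] \<Phi>1_def by (simp add: sum.reindex[OF injx])
        moreover have "card (insert x G') = a" using G' a' xS0 finS0 finite_subset
        proof -
          have "finite G'" using G' finS0 finite_subset by blast
          moreover have "x \<notin> G'" using G' xS0 by auto
          ultimately show ?thesis using G' a' by simp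
        qed
        ultimately show "(\<Sum>H\<in>{H'. G' \<subseteq> H' \<and> H' \<subseteq> S0 \<and> card H' = b'}. \<Phi>1 H) \<in> fv.span B"
          using insert.prems(4)[of "insert x G'"] G' by auto
      qed
      then obtain F1 where F1: "F1 \<subseteq> {H. H \<subseteq> S0 \<and> card H = b'}" "card F1 + (card S0 choose a') \<le> card S0 choose b'"
        "\<And>H. H \<subseteq> S0 \<Longrightarrow> card H = b' \<Longrightarrow> \<Phi>1 H \<in> fv.span (B \<union> \<Phi>1 ` F1)" by blast
      define B2 where "B2 = B \<union> \<Phi> ` (insert x ` F1)"
      have B2eq: "B \<union> \<Phi>1 ` F1 = B2" unfolding B2_def \<Phi>1_def by auto
      have IH2: "\<exists>F. F \<subseteq> {H. H \<subseteq> S0 \<and> card H = b} \<and> card F + (card S0 choose a) \<le> card S0 choose b \<and>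
        (\<forall>H. H \<subseteq> S0 \<longrightarrow> card H = b \<longrightarrow> \<Phi> H \<in> fv.span (B2 \<union> \<Phi> ` F))"
      proof (rule insert.IH)
        show "a \<le> b" using insert.prems(1) by simp
        show "a + b \<le> card S0" using abS0 by simp
        show "of_nat (x choose y) \<noteq> (0::'a)" if "y \<le> x" "x \<le> b" for x y
          using insert.prems(3) that by simp
        fix G assume G: "G \<subseteq> S0" "card G = a"
        have spl: "{H. G \<subseteq> H \<and> H \<subseteq> ?S \<and> card H = b} = {H. G \<subseteq> H \<and> H \<subseteq> S0 \<and> card H = b} \<union> insert x ` {H'. G \<subseteq> H' \<and> H' \<subseteq> S0 \<and> card H' = b'}"
        proof -
          have "{H. G \<subseteq> H \<and> H \<subseteq> ?S \<and> card H = b} = {H. G \<subseteq> H \<and> H \<subseteq> S0 \<and> card H = b} \<union> {H. insert x G \<subseteq> H \<and> H \<subseteq> ?S \<and> card H = b}"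
            by auto
          then show ?thesis using img[OF G(1)] by simp
        qed
        have fin1: "finite {H. G \<subseteq> H \<and> H \<subseteq> S0 \<and> card H = b}"
          by (rule finite_subset[of _ "Pow S0"]) (use finS0 in auto)
        have fin2: "finite {H'. G \<subseteq> H' \<and> H' \<subseteq> S0 \<and> card H' = b'}"
          by (rule finite_subset[of _ "Pow S0"]) (use finS0 in auto)
        have "(\<Sum>H\<in>{H. G \<subseteq> H \<and> H \<subseteq> ?S \<and> card H = b}. \<Phi> H)
          = (\<Sum>H\<in>{H. G \<subseteq> H \<and> H \<subseteq> S0 \<and> card H = b}. \<Phi> H) + (\<Sum>H\<in>{H'. G \<subseteq> H' \<and> H' \<subseteq> S0 \<and> card H' = b'}. \<Phi>1 H)"
          unfolding spl \<Phi>1_def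
          by (subst sum.union_disjoint) (use fin1 fin2 xS0 in \<open>auto simp: sum.reindex[OF injx]\<close>)
        then have eq: "(\<Sum>H\<in>{H. G \<subseteq> H \<and> H \<subseteq> S0 \<and> card H = b}. \<Phi> H)
          = (\<Sum>H\<in>{H. G \<subseteq> H \<and> H \<subseteq> ?S \<and> card H = b}. \<Phi> H) - (\<Sum>H\<in>{H'. G \<subseteq> H' \<and> H' \<subseteq> S0 \<and> card H' = b'}. \<Phi>1 H)"
          by (simp add: algebra_simps)
        have m1: "(\<Sum>H\<in>{H. G \<subseteq> H \<and> H \<subseteq> ?S \<and> card H = b}. \<Phi> H) \<in> fv.span B2"
          using insert.prems(4)[of G] G fv.span_mono[of B B2] by (auto simp: B2_def)
        have m2: "(\<Sum>H\<in>{H'. G \<subseteq> H' \<and> H' \<subseteq> S0 \<and> card H' = b'}. \<Phi>1 H) \<in> fv.span B2"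
          using F1(3) B2eq by (intro fv.span_sum) auto
        show "(\<Sum>H\<in>{H. G \<subseteq> H \<and> H \<subseteq> S0 \<and> card H = b}. \<Phi> H) \<in> fv.span B2"
          unfolding eq using m1 m2 by (rule fv.span_diff)
      qed
      then obtain F0 where F0: "F0 \<subseteq> {H. H \<subseteq> S0 \<and> card H = b}" "card F0 + (card S0 choose a) \<le> card S0 choose b"
        "\<And>H. H \<subseteq> S0 \<Longrightarrow> card H = b \<Longrightarrow> \<Phi> H \<in> fv.span (B2 \<union> \<Phi> ` F0)" by blast
      define F where "F = F0 \<union> insert x ` F1"
      have finF1: "finite F1"
      proof (rule finite_subset[OF F1(1)])
        show "finite {H. H \<subseteq> S0 \<and> card H = b'}" by (rule finite_subset[of _ "Pow S0"]) (use finS0 in auto)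
      qed
      have "F \<subseteq> {H. H \<subseteq> ?S \<and> card H = b}"
      proof
        fix H assume "H \<in> F"
        then consider "H \<in> F0" | H' where "H' \<in> F1" "H = insert x H'" unfolding F_def by auto
        then show "H \<in> {H. H \<subseteq> ?S \<and> card H = b}"
        proof cases
          case 1 then show ?thesis using F0(1) by auto
        next
          case 2
          then have "H' \<subseteq> S0" "card H' = b'" using F1(1) by auto
          moreover have "finite H'" using calculation finS0 finite_subset by blast
          moreover have "x \<notin> H'" using calculation xS0 by auto
          ultimately show ?thesis using 2 b' by auto
        qed
      qed
      moreover have "card F + (card ?S choose a) \<le> card ?S choose b"
      proof -
        have "card F \<le> card F0 + card F1"
        proof -
          have "card F \<le> card F0 + card (insert x ` F1)" unfolding F_def by (rule card_Un_le)
          moreover have "card (insert x ` F1) \<le> card F1" using finF1 by (rule card_image_le)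
          ultimately show ?thesis by simp
        qed
        moreover have "card ?S choose a = (card S0 choose a') + (card S0 choose a)" using cS a' by simp
        moreover have "card ?S choose b = (card S0 choose b') + (card S0 choose b)" using cS b' by simp
        ultimately show ?thesis using F0(2) F1(2) by linarith
      qed
      moreover have "\<Phi> H \<in> fv.span (B \<union> \<Phi> ` F)" if H: "H \<subseteq> ?S" "card H = b" for H
      proof (cases "x \<in> H")
        case True
        have fH: "finite H" using H finS0 by (meson finite_insert finite_subset)
        have "H - {x} \<subseteq> S0" "card (H - {x}) = b'" using H fH b' True by auto
        then have "\<Phi>1 (H - {x}) \<in> fv.span (B \<union> \<Phi>1 ` F1)" by (rule F1(3))
        moreover have "\<Phi>1 (H - {x}) = \<Phi> H" unfolding \<Phi>1_def using True by (simp add: insert_absorb)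
        moreover have "fv.span (B \<union> \<Phi>1 ` F1) \<subseteq> fv.span (B \<union> \<Phi> ` F)"
          by (rule fv.span_mono) (auto simp: \<Phi>1_def F_def)
        ultimately show ?thesis by auto
      next
        case False
        then have "H \<subseteq> S0" using H by auto
        then have "\<Phi> H \<in> fv.span (B2 \<union> \<Phi> ` F0)" using F0(3) H by auto
        moreover have "B2 \<union> \<Phi> ` F0 = B \<union> \<Phi> ` F" unfolding B2_def F_def by auto
        ultimately show ?thesis by simp
      qed
      ultimately show ?thesis by blast
    qed
  qed
qed



lemma x_times_binom: "x * (x choose e) = Suc e * (x choose Suc e) + e * (x choose e)"
proof -
  have h: "Suc e * (x choose Suc e) = (x - e) * (x choose e)"
    by (metis binomial_absorption binomial_absorb_comp)
  show ?thesis
  proof (cases "e \<le> x")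
    case True
    then have "x * (x choose e) = (x - e) * (x choose e) + e * (x choose e)"
      by (simp add: add_mult_distrib[symmetric])
    then show ?thesis using h by simp
  next
    case False
    then have "x < e" "x < Suc e" by auto
    then show ?thesis by (simp add: binomial_eq_0)
  qed
qed

lemma binpoly:
  fixes cs :: "'a::comm_ring_1 list"
  shows "\<exists>c. c (length cs) = of_nat (fact (length cs)) \<and>
     (\<forall>x::nat. (\<Prod>\<gamma>\<leftarrow>cs. of_nat x - \<gamma>) = (\<Sum>e\<le>length cs. c e * of_nat (x choose e)))"
proof (induction cs)
  case Nil
  show ?case by (intro exI[of _ "\<lambda>_. 1"]) simp
next
  case (Cons \<gamma> cs)
  obtain c where c: "c (length cs) = of_nat (fact (length cs))"
    "\<And>x::nat. (\<Prod>\<gamma>\<leftarrow>cs. of_nat x - \<gamma>) = (\<Sum>e\<le>length cs. c e * of_nat (x choose e))"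
    using Cons by blast
  define d where "d = length cs"
  define c' where "c' = (\<lambda>e. (if e = 0 then 0 else of_nat e * c (e - 1)) + (of_nat e - \<gamma>) * (if e \<le> d then c e else 0))"
  have "c' (Suc d) = of_nat (fact (Suc d))" using c(1) by (simp add: c'_def d_def algebra_simps)
  moreover have "(\<Prod>\<gamma>\<leftarrow>\<gamma> # cs. of_nat x - \<gamma>) = (\<Sum>e\<le>Suc d. c' e * of_nat (x choose e))" for x :: nat
  proof -
    have xb: "of_nat x * of_nat (x choose e) = of_nat (Suc e) * of_nat (x choose Suc e) + of_nat e * (of_nat (x choose e) :: 'a)" for e
      using arg_cong[OF x_times_binom[of x e], of "of_nat :: nat \<Rightarrow> 'a"] by (simp add: algebra_simps)
    have "(\<Prod>\<gamma>\<leftarrow>\<gamma> # cs. of_nat x - \<gamma>) = (of_nat x - \<gamma>) * (\<Sum>e\<le>d. c e * of_nat (x choose e))"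
      using c(2)[of x] by (simp add: d_def)
    also have "\<dots> = (\<Sum>e\<le>d. c e * (of_nat x * of_nat (x choose e)) - \<gamma> * c e * of_nat (x choose e))"
      by (simp add: sum_distrib_left algebra_simps sum_subtractf)
    also have "\<dots> = (\<Sum>e\<le>d. of_nat (Suc e) * c e * of_nat (x choose Suc e)) + (\<Sum>e\<le>d. (of_nat e - \<gamma>) * c e * of_nat (x choose e))"
      unfolding xb by (simp add: algebra_simps sum.distrib sum_subtractf)
    also have "(\<Sum>e\<le>d. of_nat (Suc e) * c e * of_nat (x choose Suc e))
        = (\<Sum>e\<le>Suc d. (if e = 0 then 0 else of_nat e * c (e - 1)) * of_nat (x choose e))"
      by (subst sum.atMost_Suc_shift) simp
    also have "(\<Sum>e\<le>d. (of_nat e - \<gamma>) * c e * of_nat (x choose e))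
        = (\<Sum>e\<le>Suc d. (of_nat e - \<gamma>) * (if e \<le> d then c e else 0) * of_nat (x choose e))"
      by (simp add: sum.atMost_Suc)
    also have "(\<Sum>e\<le>Suc d. (if e = 0 then 0 else of_nat e * c (e - 1)) * of_nat (x choose e))
        + (\<Sum>e\<le>Suc d. (of_nat e - \<gamma>) * (if e \<le> d then c e else 0) * of_nat (x choose e))
        = (\<Sum>e\<le>Suc d. c' e * of_nat (x choose e))"
      unfolding c'_def by (simp add: sum.distrib[symmetric] algebra_simps)
    finally show ?thesis .
  qed
  ultimately show ?case by (intro exI[of _ c']) (simp add: d_def)
qed



lemma of_nat_mod_card: "(of_nat (u mod CARD('p::prime_card)) :: 'p mod_ring) = of_nat u"
proof -
  have "u = u div CARD('p) * CARD('p) + u mod CARD('p)" by simp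
  then have "(of_nat u :: 'p mod_ring) = of_nat (u div CARD('p)) * of_nat CARD('p) + of_nat (u mod CARD('p))"
    by (metis of_nat_add of_nat_mult)
  then show ?thesis by (simp add: of_nat_card_eq_0)
qed

lemma poly_rel:
  fixes A :: "nat \<Rightarrow> nat set" and K :: "nat set"
  assumes fK: "finite K"
    and Asub: "\<And>k. k < m \<Longrightarrow> A k \<subseteq> {1..n}"
    and AK: "\<And>k. k < m \<Longrightarrow> card (A k) mod CARD('p::prime_card) \<in> K"
    and G: "G \<subseteq> {1..n-1}"
  shows "\<exists>c :: nat \<Rightarrow> 'p mod_ring. c (2 * card K) = of_nat (fact (2 * card K)) \<and>
     (\<Sum>e\<le>2*card K. fscale (c e) (\<Sum>H\<in>{H. G \<subseteq> H \<and> H \<subseteq> {1..n-1} \<and> card H = card G + e}. LForm A m H)) = 0"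
proof -
  define g where "g = card G"
  define cs :: "'p mod_ring list" where "cs = concat (map (\<lambda>\<kappa>. [of_nat \<kappa> - of_nat g, of_nat \<kappa> - of_nat g - 1] :: 'p mod_ring list) (sorted_list_of_set K))"
  have len: "length cs = 2 * card K"
    unfolding cs_def by (simp add: length_concat o_def sum_list_triv)
  have setcs: "set cs = (\<Union>\<kappa>\<in>K. {of_nat \<kappa> - of_nat g, of_nat \<kappa> - of_nat g - 1})"
    unfolding cs_def using fK by auto
  obtain c where c: "c (2 * card K) = of_nat (fact (2 * card K))"
    "\<And>x::nat. (\<Prod>\<gamma>\<leftarrow>cs. of_nat x - \<gamma>) = (\<Sum>e\<le>2 * card K. c e * of_nat (x choose e))"
    using binpoly[of cs] unfolding len by blast
  have "(\<Sum>e\<le>2*card K. fscale (c e) (\<Sum>H\<in>{H. G \<subseteq> H \<and> H \<subseteq> {1..n-1} \<and> card H = card G + e}. LForm A m H)) = 0"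
  proof (rule ext)
    fix k
    let ?Ls = "\<lambda>e. {H. G \<subseteq> H \<and> H \<subseteq> {1..n-1} \<and> card H = g + e}"
    have "(\<Sum>e\<le>2*card K. fscale (c e) (\<Sum>H\<in>{H. G \<subseteq> H \<and> H \<subseteq> {1..n-1} \<and> card H = card G + e}. LForm A m H)) k
        = (\<Sum>e\<le>2*card K. c e * (\<Sum>H\<in>?Ls e. LForm A m H k))"
      by (simp add: sum_apply_fun fscale_def g_def)
    also have "\<dots> = 0"
    proof (cases "k < m \<and> G \<subseteq> A k")
      case False
      then have "LForm A m H k = (0::'p mod_ring)" if "H \<in> ?Ls e" for H e
        using that by (auto simp: LForm_def)
      then show ?thesis by simp
    next
      case True
      define Y where "Y = {1..n-1} \<inter> A k"
      have fY: "finite Y" by (simp add: Y_def)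
      have GY: "G \<subseteq> Y" using G True by (auto simp: Y_def)
      have gu: "g \<le> card Y" unfolding g_def using GY fY by (rule card_mono[rotated])
      define x where "x = card Y - g"
      have cnt: "(\<Sum>H\<in>?Ls e. LForm A m H k) = (of_nat (x choose e) :: 'p mod_ring)" for e
      proof -
        have fL: "finite (?Ls e)" by (rule finite_subset[of _ "Pow {1..n-1}"]) auto
        have "(\<Sum>H\<in>?Ls e. LForm A m H k) = (\<Sum>H\<in>?Ls e. if H \<subseteq> A k then 1 else (0::'p mod_ring))"
          using True by (simp add: LForm_def)
        also have "\<dots> = of_nat (card {H \<in> ?Ls e. H \<subseteq> A k})"
          using fL by (simp add: sum.If_cases Int_def)
        also have "{H \<in> ?Ls e. H \<subseteq> A k} = {H. G \<subseteq> H \<and> H \<subseteq> Y \<and> card H = g + e}"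
          by (auto simp: Y_def)
        also have "card \<dots> = x choose e"
          using card_supsets[OF fY GY, of "g + e"] by (simp add: x_def g_def)
        finally show ?thesis .
      qed
      have root: "\<exists>\<gamma>\<in>set cs. (of_nat x :: 'p mod_ring) = \<gamma>"
      proof -
        have ox: "(of_nat x :: 'p mod_ring) = of_nat (card Y) - of_nat g"
          using gu by (simp add: x_def of_nat_diff)
        define \<kappa> where "\<kappa> = card (A k) mod CARD('p)"
        have \<kappa>K: "\<kappa> \<in> K" using AK True by (simp add: \<kappa>_def)
        have o\<kappa>: "(of_nat \<kappa> :: 'p mod_ring) = of_nat (card (A k))"
          unfolding \<kappa>_def by (rule of_nat_mod_card)
        have YA: "Y = A k - {n}" using Asub[of k] True unfolding Y_def by fastforce
        have fA: "finite (A k)" using Asub[of k] True finite_subset by blast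
        show ?thesis
        proof (cases "n \<in> A k")
          case True
          then have "card (A k) = Suc (card Y)" using YA fA by (metis card_Suc_Diff1)
          then have "(of_nat x :: 'p mod_ring) = of_nat \<kappa> - of_nat g - 1"
            using ox o\<kappa> by simp
          then show ?thesis using \<kappa>K setcs by blast
        next
          case False
          then have "card (A k) = card Y" using YA by simp
          then have "(of_nat x :: 'p mod_ring) = of_nat \<kappa> - of_nat g"
            using ox o\<kappa> by simp
          then show ?thesis using \<kappa>K setcs by blast
        qed
      qed
      have "(\<Prod>\<gamma>\<leftarrow>cs. (of_nat x :: 'p mod_ring) - \<gamma>) = 0"
        using root by (auto simp: prod_list_zero_iff)
      then have "(\<Sum>e\<le>2 * card K. c e * of_nat (x choose e)) = 0" using c(2)[of x] by simp
      then show ?thesis unfolding cnt .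
    qed
    finally show "(\<Sum>e\<le>2*card K. fscale (c e) (\<Sum>H\<in>{H. G \<subseteq> H \<and> H \<subseteq> {1..n-1} \<and> card H = card G + e}. LForm A m H)) k = 0 k"
      by simp
  qed
  then show ?thesis using c(1) by blast
qed



lemma chr_binom:
  assumes "x < CARD('p::prime_card)" "y \<le> x"
  shows "(of_nat (x choose y) :: 'p mod_ring) \<noteq> 0"
proof
  assume "(of_nat (x choose y) :: 'p mod_ring) = 0"
  then have "CARD('p) dvd (x choose y)" by (rule of_nat_0_mod_ring_dvd)
  then have "CARD('p) dvd fact x"
    using binomial_fact_lemma[OF assms(2)] by (metis dvd_mult_left dvd_trans dvd_triv_right)
  then have "CARD('p) \<le> x" using prime_dvd_fact_iff[OF prime_card] by blast
  then show False using assms by simp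
qed

lemma chr_fact:
  assumes "x < CARD('p::prime_card)"
  shows "(of_nat (fact x) :: 'p mod_ring) \<noteq> 0"
proof
  assume "(of_nat (fact x) :: 'p mod_ring) = 0"
  then have "CARD('p) dvd fact x" by (rule of_nat_0_mod_ring_dvd)
  then have "CARD('p) \<le> x" using prime_dvd_fact_iff[OF prime_card] by blast
  then show False using assms by simp
qed

lemma dim_union_le:
  assumes "finite A" "finite C" "V \<subseteq> fv.span (A \<union> C)"
  shows "fv.dim V \<le> fv.dim (A::(nat \<Rightarrow> 'a::field) set) + card C"
proof -
  obtain Bb where Bb: "Bb \<subseteq> A" "fv.independent Bb" "A \<subseteq> fv.span Bb" "card Bb = fv.dim A"
    by (rule fv.basis_exists)
  have fBb: "finite Bb" using Bb(1) assms(1) finite_subset by blast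
  have "A \<union> C \<subseteq> fv.span (Bb \<union> C)"
    using Bb(3) fv.span_mono[of Bb "Bb \<union> C"] fv.span_superset[of "Bb \<union> C"] by auto
  then have "fv.span (A \<union> C) \<subseteq> fv.span (Bb \<union> C)" by (simp add: fv.span_minimal)
  then have "V \<subseteq> fv.span (Bb \<union> C)" using assms(3) by auto
  then have "fv.dim V \<le> card (Bb \<union> C)"
    using fBb assms(2) by (intro fv.dim_le_card) auto
  also have "\<dots> \<le> card Bb + card C" by (rule card_Un_le)
  finally show ?thesis using Bb(4) by simp
qed

lemma rho_rel:
  fixes A :: "nat \<Rightarrow> nat set" and K :: "nat set"
  assumes fK: "finite K"
    and Asub: "\<And>k. k < m \<Longrightarrow> A k \<subseteq> {1..n}"
    and AK: "\<And>k. k < m \<Longrightarrow> card (A k) mod CARD('p::prime_card) \<in> K"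
    and G: "G \<subseteq> {1..n-1}" "i \<le> card G"
    and b: "b = card G + 2 * card K" "b < CARD('p)" "card K \<ge> 1"
  shows "(\<Sum>H\<in>{H. G \<subseteq> H \<and> H \<subseteq> {1..n-1} \<and> card H = b}. (LForm A m H :: nat \<Rightarrow> 'p mod_ring))
     \<in> fv.span ((LForm A m :: nat set \<Rightarrow> nat \<Rightarrow> 'p mod_ring) ` {H. H \<subseteq> {1..n-1} \<and> i \<le> card H \<and> card H \<le> b - 1})"
    (is "?R (2 * card K) \<in> fv.span ?gens")
proof -
  let ?Q = "\<lambda>e. (\<Sum>H\<in>{H. G \<subseteq> H \<and> H \<subseteq> {1..n-1} \<and> card H = card G + e}. (LForm A m H :: nat \<Rightarrow> 'p mod_ring))"
  obtain c :: "nat \<Rightarrow> 'p mod_ring" where c: "c (2 * card K) = of_nat (fact (2 * card K))"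
    "(\<Sum>e\<le>2*card K. fscale (c e) (?Q e)) = 0"
    using poly_rel[where A=A and K=K and m=m and n=n and G=G and 'p='p] fK Asub AK G(1) by blast
  have c0: "c (2 * card K) \<noteq> 0" unfolding c(1) using b by (intro chr_fact) simp
  have "{..2 * card K} = insert (2 * card K) {..<2 * card K}" by auto
  then have "fscale (c (2 * card K)) (?Q (2 * card K)) + (\<Sum>e<2*card K. fscale (c e) (?Q e)) = 0"
    using c(2) by simp
  then have eq: "fscale (c (2 * card K)) (?Q (2 * card K)) = - (\<Sum>e<2*card K. fscale (c e) (?Q e))"
    by (simp add: eq_neg_iff_add_eq_0)
  have "(\<Sum>e<2*card K. fscale (c e) (?Q e)) \<in> fv.span ?gens"
  proof (intro fv.span_sum fv.span_scale fv.span_base)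
    fix e H assume "e \<in> {..<2 * card K}" "H \<in> {H. G \<subseteq> H \<and> H \<subseteq> {1..n-1} \<and> card H = card G + e}"
    then show "LForm A m H \<in> ?gens" using G b by auto
  qed
  then have "fscale (c (2 * card K)) (?Q (2 * card K)) \<in> fv.span ?gens"
    unfolding eq by (rule fv.span_neg)
  then have "fscale (inverse (c (2 * card K))) (fscale (c (2 * card K)) (?Q (2 * card K))) \<in> fv.span ?gens"
    by (rule fv.span_scale)
  then show ?thesis using c0 b(1) by (simp add: fv.scale_scale)
qed



lemma sum_shift_window:
  assumes "a0 \<le> Suc t"
  shows "(\<Sum>j\<in>{Suc a0..Suc t}. f j) + f a0 = (\<Sum>j\<in>{a0..t}. f j) + (f (Suc t) :: nat)"
proof -
  have "(\<Sum>j\<in>{a0..Suc t}. f j) = f a0 + (\<Sum>j\<in>{Suc a0..Suc t}. f j)"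
    using assms by (rule sum.atLeast_Suc_atMost)
  moreover have "(\<Sum>j\<in>{a0..Suc t}. f j) = (\<Sum>j\<in>{a0..t}. f j) + f (Suc t)"
    using assms by (simp add: sum.cl_ivl_Suc)
  ultimately show ?thesis by simp
qed

theorem mainTheorem6:
  fixes A :: "nat \<Rightarrow> nat set" and m n :: nat and K L :: "nat set"
    and i :: nat
  assumes "K \<subseteq> {0..<CARD('p::prime_card)}" and "L \<subseteq> {0..<CARD('p)}"
    and "K \<inter> L = {}"
    and "\<And>k. k < m \<Longrightarrow> A k \<subseteq> {1..n}"
    and "inj_on A {0..<m}"
    and "\<And>k. k < m \<Longrightarrow> card (A k) mod CARD('p) \<in> K"
    and "\<And>k l. k < m \<Longrightarrow> l < m \<Longrightarrow> k \<noteq> l \<Longrightarrow> card (A k \<inter> A l) mod CARD('p) \<in> L"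
    and "int n \<ge> 2 * int (card L) - 2 * int (card K) + 1"
    and "int i \<le> int (card L) - 2 * int (card K) + 1"
  shows "(\<Sum>j\<in>{i..<i + 2 * card K}. (n - 1) choose j)
       + (spandim ((LForm A m :: nat set \<Rightarrow> nat \<Rightarrow> 'p mod_ring) `
                    {H. H \<subseteq> {1..n-1} \<and> i \<le> card H \<and> card H \<le> card L})
          - spandim ((LForm A m :: nat set \<Rightarrow> nat \<Rightarrow> 'p mod_ring) `
                    {H. H \<subseteq> {1..n-1} \<and> i \<le> card H \<and> card H < i + 2 * card K}))
     \<le> (\<Sum>j\<in>{card L + 1 - 2 * card K..card L}. (n - 1) choose j)"
proof -
  note Ksub = assms(1) and Lsub = assms(2) and KL = assms(3) and Asub = assms(4) and AK = assms(6)
  define r where "r = card K"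
  define s where "s = card L"
  define N where "N = n - 1"
  define X where "X = {1..n-1}"
  define Lf where "Lf = (LForm A m :: nat set \<Rightarrow> nat \<Rightarrow> 'p mod_ring)"
  define gens where "gens t = Lf ` {H. H \<subseteq> X \<and> i \<le> card H \<and> card H \<le> t}" for t
  define W where "W t = fv.dim (gens t)" for t
  have sd: "spandim S = fv.dim S" for S :: "(nat \<Rightarrow> 'p mod_ring) set"
    by (simp add: spandim_def)
  have fK: "finite K" using Ksub finite_subset by blast
  have fL: "finite L" using Lsub finite_subset by blast
  have fX: "finite X" and cX: "card X = N" by (simp_all add: X_def N_def)
  have fgens: "finite (gens t)" for t
    unfolding gens_def by (rule finite_imageI, rule finite_subset[of _ "Pow X"]) (use fX in auto)
  show ?thesis
  proof (cases "r = 0")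
    case True
    then have "K = {}" using fK by (simp add: r_def)
    then have m0: "m = 0" using AK[of 0] by (cases m) auto
    have z: "fv.dim (Lf ` S) = 0" for S
    proof -
      have "Lf ` S \<subseteq> fv.span {}" by (auto simp: Lf_def LForm_def m0 fv.span_empty func_zero)
      then show ?thesis using fv.dim_le_card[of "Lf ` S" "{}"] by simp
    qed
    show ?thesis using True z unfolding sd Lf_def[symmetric] r_def by simp
  next
    case False
    then have r1: "r \<ge> 1" by simp
    have "card (K \<union> L) = r + s" using fK fL KL by (simp add: card_Un_disjoint r_def s_def)
    moreover have "card (K \<union> L) \<le> CARD('p)"
    proof -
      have "card (K \<union> L) \<le> card {0..<CARD('p)}" using Ksub Lsub by (intro card_mono) auto
      then show ?thesis by simp
    qed
    ultimately have sp: "s < CARD('p)" using r1 by simp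
    have i2r: "i + 2 * r \<le> s + 1" using assms(9) by (simp add: r_def s_def)
    have nbig: "2 * s \<le> N + 2 * r" using assms(8) i2r r1 by (simp add: r_def s_def N_def)
    define q where "q = i + 2 * r - 1"
    have step: "W b + (N choose (b - 2 * r)) \<le> W (b - 1) + (N choose b)"
      if b: "i + 2 * r \<le> b" "b \<le> s" for b
    proof -
      define a where "a = b - 2 * r"
      have ia: "i \<le> a" using b by (simp add: a_def)
      have "\<exists>F. F \<subseteq> {H. H \<subseteq> X \<and> card H = b} \<and> card F + (card X choose a) \<le> card X choose b \<and>
        (\<forall>H. H \<subseteq> X \<longrightarrow> card H = b \<longrightarrow> Lf H \<in> fv.span (gens (b - 1) \<union> Lf ` F))"
      proof (rule incl_span[OF fX])
        show "a \<le> b" by (simp add: a_def)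
        show "a + b \<le> card X" using cX nbig b by (simp add: a_def)
        show "of_nat (x choose y) \<noteq> (0::'p mod_ring)" if "y \<le> x" "x \<le> b" for x y
          using that b sp by (intro chr_binom) auto
        fix G assume G: "G \<subseteq> X" "card G = a"
        have cG: "i \<le> card G" "b = card G + 2 * card K" using G ia b by (simp_all add: a_def r_def)
        have "(\<Sum>H\<in>{H. G \<subseteq> H \<and> H \<subseteq> {1..n-1} \<and> card H = b}. (LForm A m H :: nat \<Rightarrow> 'p mod_ring))
           \<in> fv.span ((LForm A m :: nat set \<Rightarrow> nat \<Rightarrow> 'p mod_ring) ` {H. H \<subseteq> {1..n-1} \<and> i \<le> card H \<and> card H \<le> b - 1})"
        proof (rule rho_rel[where A=A and K=K and m=m and n=n and G=G and i=i and b=b and 'p='p])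
          show "finite K" by (rule fK)
          show "\<And>k. k < m \<Longrightarrow> A k \<subseteq> {1..n}" by (rule Asub)
          show "\<And>k. k < m \<Longrightarrow> card (A k) mod CARD('p) \<in> K" by (rule AK)
          show "G \<subseteq> {1..n-1}" using G(1) by (simp add: X_def)
          show "i \<le> card G" by (rule cG(1))
          show "b = card G + 2 * card K" by (rule cG(2))
          show "b < CARD('p)" using b sp by simp
          show "1 \<le> card K" using r1 by (simp add: r_def)
        qed
        then show "(\<Sum>H\<in>{H. G \<subseteq> H \<and> H \<subseteq> X \<and> card H = b}. Lf H) \<in> fv.span (gens (b - 1))"
          by (simp only: gens_def Lf_def X_def)
      qed
      then obtain F where F: "F \<subseteq> {H. H \<subseteq> X \<and> card H = b}" "card F + (N choose a) \<le> N choose b"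
        "\<And>H. H \<subseteq> X \<Longrightarrow> card H = b \<Longrightarrow> Lf H \<in> fv.span (gens (b - 1) \<union> Lf ` F)"
        using cX by blast
      have fF: "finite F" using F(1) by (rule finite_subset) (rule finite_subset[of _ "Pow X"], use fX in auto)
      have "gens b \<subseteq> fv.span (gens (b - 1) \<union> Lf ` F)"
      proof
        fix v assume "v \<in> gens b"
        then obtain H where H: "H \<subseteq> X" "i \<le> card H" "card H \<le> b" "v = Lf H" by (auto simp: gens_def)
        show "v \<in> fv.span (gens (b - 1) \<union> Lf ` F)"
        proof (cases "card H = b")
          case True then show ?thesis using F(3) H by auto
        next
          case False
          then have "v \<in> gens (b - 1)" using H by (auto simp: gens_def)
          then show ?thesis by (intro fv.span_base) auto
        qed
      qed
      then have "W b \<le> W (b - 1) + card (Lf ` F)" unfolding W_def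
        using fgens fF by (intro dim_union_le) auto
      also have "\<dots> \<le> W (b - 1) + card F" using card_image_le[OF fF] by simp
      finally show ?thesis using F(2) by (simp add: a_def)
    qed
    have tele: "W (q + d) + (\<Sum>j\<in>{i..<i + 2 * r}. N choose j) \<le> W q + (\<Sum>j\<in>{q + d + 1 - 2 * r..q + d}. N choose j)"
      if "q + d \<le> s" for d
      using that
    proof (induction d)
      case 0
      have "{i..<i + 2 * r} = {q + 0 + 1 - 2 * r..q + 0}" using r1 by (auto simp: q_def)
      then show ?case by simp
    next
      case (Suc d)
      define t where "t = q + d"
      have IH: "W t + (\<Sum>j\<in>{i..<i + 2 * r}. N choose j) \<le> W q + (\<Sum>j\<in>{t + 1 - 2 * r..t}. N choose j)"
        using Suc by (simp add: t_def)
      have st: "W (Suc t) + (N choose (Suc t - 2 * r)) \<le> W t + (N choose Suc t)"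
        using step[of "Suc t"] Suc.prems r1 by (simp add: t_def q_def)
      have win: "(\<Sum>j\<in>{Suc (Suc t - 2 * r)..Suc t}. N choose j) + (N choose (Suc t - 2 * r))
          = (\<Sum>j\<in>{Suc t - 2 * r..t}. N choose j) + (N choose Suc t)"
        by (rule sum_shift_window) simp
      have e1: "Suc (Suc t - 2 * r) = q + Suc d + 1 - 2 * r" using r1 by (simp add: t_def q_def)
      have e2: "Suc t - 2 * r = t + 1 - 2 * r" by simp
      show ?case using IH st win unfolding e1[symmetric] e2 by (simp add: t_def)
    qed
    have qs: "q \<le> s" using i2r r1 by (simp add: q_def)
    have fin: "W s + (\<Sum>j\<in>{i..<i + 2 * r}. N choose j) \<le> W q + (\<Sum>j\<in>{s + 1 - 2 * r..s}. N choose j)"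
      using tele[of "s - q"] qs by simp
    have Wqs: "W q \<le> W s"
    proof -
      have "gens q \<subseteq> fv.span (gens s \<union> {})" using qs
        by (intro subsetI fv.span_base) (auto simp: gens_def)
      then show ?thesis unfolding W_def using dim_union_le[of "gens s" "{}" "gens q"] fgens by simp
    qed
    have set1: "{H. H \<subseteq> {1..n-1} \<and> i \<le> card H \<and> card H < i + 2 * card K} = {H. H \<subseteq> X \<and> i \<le> card H \<and> card H \<le> q}"
      using r1 by (auto simp: X_def q_def r_def)
    have "spandim ((LForm A m :: nat set \<Rightarrow> nat \<Rightarrow> 'p mod_ring) ` {H. H \<subseteq> {1..n-1} \<and> i \<le> card H \<and> card H \<le> card L}) = W s"
      by (simp add: sd W_def gens_def Lf_def X_def s_def)
    moreover have "spandim ((LForm A m :: nat set \<Rightarrow> nat \<Rightarrow> 'p mod_ring) ` {H. H \<subseteq> {1..n-1} \<and> i \<le> card H \<and> card H < i + 2 * card K}) = W q"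
      unfolding set1 by (simp add: sd W_def gens_def Lf_def)
    ultimately show ?thesis using fin Wqs by (simp add: r_def s_def N_def)
  qed
qed


end
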